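(* Let $M$ be a root-closed Puiseux monoid with $M\neq\{0\}$. Then: (1) $M$ is atomic if and only if $M$ is cyclic; (2) $M$ is antimatter if and only if $0$ is a limit point of $M$ (in the usual topology of $\mathbb{R}$); (3) $M$ is either atomic or antimatter.
   Context: A Puiseux monoid is an additive submonoid of $(\mathbb{Q}_{\ge 0},+)$. Its difference group is $\mathsf{gp}(M)=\{x-y\mid x,y\in M\}$. An element $x\in\mathsf{gp}(M)$ is a root element of $M$ if $nx\in M$ for some $n\in\mathbb{N}$; $M$ is root-closed if every root element of $M$ lies in $M$. An atom of $M$ is a nonzero element $a$ such that $a=x+y$ with $x,y\in M$ implies $x=0$ or $y=0$. $M$ is atomic if every element is a finite sum of atoms, antimatter if it has no atoms, and cyclic if it is generated by a single element. *)

theory Defs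
  imports "HOL-Analysis.Analysis"
begin

definition puiseux_monoid :: "rat set \<Rightarrow> bool" where
  "puiseux_monoid M \<longleftrightarrow> 0 \<in> M \<and> (\<forall>x\<in>M. \<forall>y\<in>M. x + y \<in> M) \<and> (\<forall>x\<in>M. 0 \<le> x)"

definition diff_group :: "rat set \<Rightarrow> rat set" where
  "diff_group M = {x - y | x y. x \<in> M \<and> y \<in> M}"

definition root_element :: "rat set \<Rightarrow> rat \<Rightarrow> bool" where
  "root_element M x \<longleftrightarrow> x \<in> diff_group M \<and> (\<exists>n::nat. n \<ge> 1 \<and> of_nat n * x \<in> M)"

definition root_closed :: "rat set \<Rightarrow> bool" where
  "root_closed M \<longleftrightarrow> (\<forall>x. root_element M x \<longrightarrow> x \<in> M)"

definition atom :: "rat set \<Rightarrow> rat \<Rightarrow> bool" where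
  "atom M a \<longleftrightarrow> a \<in> M \<and> a \<noteq> 0 \<and>
     (\<forall>x\<in>M. \<forall>y\<in>M. a = x + y \<longrightarrow> x = 0 \<or> y = 0)"

definition atomic :: "rat set \<Rightarrow> bool" where
  "atomic M \<longleftrightarrow> (\<forall>x\<in>M. \<exists>as. (\<forall>a\<in>set as. atom M a) \<and> sum_list as = x)"

definition antimatter :: "rat set \<Rightarrow> bool" where
  "antimatter M \<longleftrightarrow> (\<nexists>a. atom M a)"

definition cyclic :: "rat set \<Rightarrow> bool" where
  "cyclic M \<longleftrightarrow> (\<exists>g. M = {of_nat n * g | n::nat. True})"

end

theory Submission
  imports Defs
begin

lemma mult_in:
  assumes "puiseux_monoid M" "y \<in> M" shows "of_nat m * y \<in> M"
  using assms by (induction m) (auto simp: puiseux_monoid_def algebra_simps)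

lemma sub_in:
  assumes pm: "puiseux_monoid M" and rc: "root_closed M" and x: "x \<in> M" and y: "y \<in> M"
    and le: "y \<le> x"
  shows "x - y \<in> M"
proof (cases "y = 0")
  case True thus ?thesis using x by simp
next
  case False
  with y pm have ypos: "y > 0" by (force simp: puiseux_monoid_def)
  obtain r s where rs: "quotient_of y = (r, s)" by (cases "quotient_of y")
  have ys: "y = of_int r / of_int s" and s0: "s > 0" using rs
    by (auto simp: quotient_of_div quotient_of_denom_pos)
  have r0: "r > 0" using ypos ys s0 by (simp add: zero_less_divide_iff)
  obtain u v where uv: "quotient_of (x - y) = (u, v)" by (cases "quotient_of (x-y)")
  have xs: "x - y = of_int u / of_int v" and v0: "v > 0" using uv
    by (auto simp: quotient_of_div quotient_of_denom_pos)
  have "0 \<le> of_int u / (of_int v::rat)" using le xs by simp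
  hence u0: "u \<ge> 0" using v0 by (simp add: zero_le_divide_iff)
  have "of_nat (nat (u * s)) * y \<in> M" by (rule mult_in[OF pm y])
  moreover have "of_nat (nat (u * s)) * y = of_nat (nat (v * r)) * (x - y)"
    using u0 s0 v0 r0 ys xs by (simp add: field_simps)
  ultimately have "of_nat (nat (v * r)) * (x - y) \<in> M" by simp
  moreover have "0 < v * r" using v0 r0 by (rule mult_pos_pos)
  hence "nat (v * r) \<ge> 1" by arith
  moreover have "x - y \<in> diff_group M" using x y by (auto simp: diff_group_def)
  ultimately have "root_element M (x - y)" unfolding root_element_def by blast
  thus ?thesis using rc unfolding root_closed_def by blast
qed

theorem mainTheorem10:
  fixes M :: "rat set"
  assumes "puiseux_monoid M" and "root_closed M" and "M \<noteq> {0}"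
  shows "(atomic M \<longleftrightarrow> cyclic M)
       \<and> (antimatter M \<longleftrightarrow> (0::real) islimpt (real_of_rat ` M))
       \<and> (atomic M \<or> antimatter M)"
proof -
  note pm = assms(1) and rc = assms(2)
  have z: "0 \<in> M" and add: "\<And>x y. x \<in> M \<Longrightarrow> y \<in> M \<Longrightarrow> x + y \<in> M"
    and nn: "\<And>x. x \<in> M \<Longrightarrow> 0 \<le> x" using pm by (auto simp: puiseux_monoid_def)
  obtain p where p: "p \<in> M" "p \<noteq> 0" using assms(3) z by blast
  show ?thesis
  proof (cases "\<exists>g\<in>M. g \<noteq> 0 \<and> (\<forall>x\<in>M. x \<noteq> 0 \<longrightarrow> g \<le> x)")
    case True
    then obtain g where g: "g \<in> M" "g \<noteq> 0" "\<And>x. x \<in> M \<Longrightarrow> x \<noteq> 0 \<Longrightarrow> g \<le> x" by blast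
    have gpos: "g > 0" using g nn[of g] by simp
    have Meq: "M = {of_nat n * g | n::nat. True}"
    proof
      show "{of_nat n * g | n::nat. True} \<subseteq> M" using mult_in[OF pm g(1)] by blast
    next
      show "M \<subseteq> {of_nat n * g | n::nat. True}"
      proof
        fix x assume x: "x \<in> M"
        define q where "q = nat (floor (x / g))"
        have xg: "x / g \<ge> 0" using nn[OF x] gpos by simp
        have fq: "of_nat q = of_int (floor (x/g))" using xg by (simp add: q_def)
        have fc: "of_int (floor (x/g)) \<le> x/g" "x/g < of_int (floor (x/g) + 1)"
          using floor_correct[of "x/g"] by auto
        have q1: "of_nat q * g \<le> x" unfolding fq using fc(1) gpos by (simp add: le_divide_eq)
        have q2: "x < of_nat q * g + g" unfolding fq using fc(2) gpos by (simp add: divide_less_eq algebra_simps)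
        have "x - of_nat q * g \<in> M" using sub_in[OF pm rc x mult_in[OF pm g(1)] q1] .
        with g(3) q2 have "x - of_nat q * g = 0" by fastforce
        thus "x \<in> {of_nat n * g | n::nat. True}" by auto
      qed
    qed
    have cyc: "cyclic M" unfolding cyclic_def using Meq by blast
    have atg: "atom M g"
      unfolding atom_def
    proof (intro conjI ballI impI g(1) g(2))
      fix a b assume a: "a \<in> M" and b: "b \<in> M" and e: "g = a + b"
      show "a = 0 \<or> b = 0"
      proof (rule ccontr)
        assume "\<not> (a = 0 \<or> b = 0)"
        then have "g \<le> a" "g \<le> b" using g(3) a b by auto
        thus False using e gpos by simp
      qed
    qed
    have at: "atomic M" unfolding atomic_def
    proof
      fix x assume "x \<in> M"
      then obtain n where "x = of_nat n * g" using Meq by auto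
      thus "\<exists>as. (\<forall>a\<in>set as. atom M a) \<and> sum_list as = x"
        using atg by (intro exI[of _ "replicate n g"]) (simp add: sum_list_replicate)
    qed
    have nam: "\<not> antimatter M" using atg by (auto simp: antimatter_def)
    have nlp: "\<not> (0::real) islimpt (real_of_rat ` M)"
    proof
      assume "(0::real) islimpt (real_of_rat ` M)"
      then obtain y where y: "y \<in> real_of_rat ` M" "y \<noteq> 0" "dist y 0 < real_of_rat g"
        unfolding islimpt_approachable using gpos by (meson zero_less_of_rat_iff)
      then obtain x where x: "x \<in> M" "y = real_of_rat x" by auto
      have "x \<noteq> 0" using x y by auto
      hence "g \<le> x" using g(3) x by auto
      hence "real_of_rat g \<le> real_of_rat x" by (simp add: of_rat_less_eq)
      thus False using y x nn[OF x(1)] by (simp add: dist_real_def)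
    qed
    show ?thesis using cyc at nam nlp by blast
  next
    case False
    note nomin = False
    hence nm: "\<And>a. a \<in> M \<Longrightarrow> a \<noteq> 0 \<Longrightarrow> \<exists>x\<in>M. x \<noteq> 0 \<and> x < a" by force
    have am: "antimatter M" unfolding antimatter_def
    proof
      assume "\<exists>a. atom M a"
      then obtain a where a: "atom M a" by blast
      have aM: "a \<in> M" "a \<noteq> 0" using a by (auto simp: atom_def)
      then obtain x where x: "x \<in> M" "x \<noteq> 0" "x < a" using nm by blast
      have "a - x \<in> M" using sub_in[OF pm rc _ x(1)] a x by (auto simp: atom_def)
      moreover have "a - x \<noteq> 0" using x by simp
      moreover have "\<forall>u\<in>M. \<forall>v\<in>M. a = u + v \<longrightarrow> u = 0 \<or> v = 0" using a by (simp add: atom_def)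
      ultimately have "x = 0 \<or> a - x = 0" using x(1) by force
      thus False using x by simp
    qed
    have half: "\<exists>x\<in>M. x \<noteq> 0 \<and> x \<le> p / 2^k" for k :: nat
    proof (induction k)
      case 0 thus ?case using p by auto
    next
      case (Suc k)
      then obtain x where x: "x \<in> M" "x \<noteq> 0" "x \<le> p / 2^k" by blast
      then obtain y where y: "y \<in> M" "y \<noteq> 0" "y < x" using nm by blast
      have xy: "x - y \<in> M" using sub_in[OF pm rc x(1) y(1)] y by simp
      have e: "p / 2^Suc k = (p / 2^k) / 2" by simp
      have h: "x / 2 \<le> p / 2^Suc k" unfolding e using x(3) by (rule divide_right_mono) simp
      show ?case
      proof (cases "y \<le> x - y")
        case True
        hence "y \<le> x / 2" by simp
        hence "y \<le> p / 2^Suc k" using h by (rule order_trans)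
        with y show ?thesis by blast
      next
        case False
        hence "x - y \<le> x / 2" by simp
        hence "x - y \<le> p / 2^Suc k" using h by (rule order_trans)
        moreover have "x - y \<noteq> 0" using y by simp
        ultimately show ?thesis using xy by blast
      qed
    qed
    have lp: "(0::real) islimpt (real_of_rat ` M)"
      unfolding islimpt_approachable
    proof (intro allI impI)
      fix e :: real assume e: "e > 0"
      obtain n :: nat where n: "real_of_rat p / e < n" using reals_Archimedean2 by blast
      have "real n < 2^n" by (rule of_nat_less_two_power)
      hence "e * real n \<le> e * 2^n" using e by simp
      moreover have "real_of_rat p < e * real n" using n e by (simp add: field_simps)
      ultimately have "real_of_rat p < e * 2^n" by linarith
      hence pe: "real_of_rat p / 2^n < e" by (simp add: field_simps)
      obtain x where x: "x \<in> M" "x \<noteq> 0" "x \<le> p / 2^n" using half by blast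
      have "real_of_rat x \<le> real_of_rat (p / 2^n)" using x(3) by (simp add: of_rat_less_eq)
      hence "real_of_rat x < e" using pe by (simp add: of_rat_divide of_rat_power)
      thus "\<exists>x'\<in>real_of_rat ` M. x' \<noteq> 0 \<and> dist x' 0 < e"
        using x nn[OF x(1)] by (intro bexI[of _ "real_of_rat x"]) (auto simp: dist_real_def)
    qed
    have nat_: "\<not> atomic M"
    proof
      assume "atomic M"
      then obtain as where "\<forall>a\<in>set as. atom M a" "sum_list as = p" using p by (auto simp: atomic_def)
      with am have "as = []" by (cases as) (auto simp: antimatter_def)
      thus False using \<open>sum_list as = p\<close> p by simp
    qed
    have ncyc: "\<not> cyclic M"
    proof
      assume "cyclic M"
      then obtain g where Meq: "M = {of_nat n * g | n::nat. True}" by (auto simp: cyclic_def)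
      have gM: "g \<in> M" using Meq by (auto intro: exI[of _ 1])
      have "g \<noteq> 0" using Meq assms(3) by auto
      moreover have "g \<le> x" if "x \<in> M" "x \<noteq> 0" for x
      proof -
        obtain n :: nat where xn: "x = of_nat n * g" using \<open>x \<in> M\<close> Meq by auto
        have "n \<ge> 1" using that xn by (cases n) auto
        moreover have "g \<ge> 0" using nn[OF gM] .
        ultimately have "of_nat 1 * g \<le> of_nat n * g" by (intro mult_right_mono) simp_all
        thus ?thesis by (simp add: xn)
      qed
      ultimately have "\<exists>g\<in>M. g \<noteq> 0 \<and> (\<forall>x\<in>M. x \<noteq> 0 \<longrightarrow> g \<le> x)"
        using gM by (intro bexI[of _ g]) auto
      with nomin show False by (rule notE)
    qed
    show ?thesis using am lp nat_ ncyc by simp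
  qed
qed

end
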